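(* Let $\mathbb{R} = A \cup B$ be a partition of $\mathbb{R}$ into two disjoint sets $A$ and $B$, each viewed as a suborder of $(\mathbb{R},<)$. Then there is an open interval $I = (a,b)$, with $-\infty \le a < b \le \infty$, such that $A \cap I$ is not order-isomorphic to $B \cap I$. Equivalently, $\mathbb{R}$ cannot be partitioned into two everywhere isomorphic sets.
   Context: Two disjoint sets $A, B \subseteq \mathbb{R}$ are called everywhere isomorphic if for every open interval $I=(a,b)$ with $-\infty\le a<b\le\infty$ (so $a=-\infty$, $b=\infty$ are allowed), the suborders $A\cap I$ and $B\cap I$ of $(\mathbb{R},<)$ are order-isomorphic. *)

theory Defs
  imports "HOL-Analysis.Analysis"
begin

definition order_isomorphic :: "real set \<Rightarrow> real set \<Rightarrow> bool" where
  "order_isomorphic S T \<longleftrightarrow>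
     (\<exists>f. bij_betw f S T \<and> (\<forall>x\<in>S. \<forall>y\<in>S. x < y \<longrightarrow> f x < f y))"

definition open_interval_ext :: "ereal \<Rightarrow> ereal \<Rightarrow> real set" where
  "open_interval_ext a b = {x. a < ereal x \<and> ereal x < b}"

definition everywhere_isomorphic :: "real set \<Rightarrow> real set \<Rightarrow> bool" where
  "everywhere_isomorphic A B \<longleftrightarrow> A \<inter> B = {} \<and>
     (\<forall>a b. a < b \<longrightarrow>
        order_isomorphic (A \<inter> open_interval_ext a b) (B \<inter> open_interval_ext a b))"

end

theory Submission
  imports Defs
begin

lemma tarski_fp:
  fixes \<phi> :: "real \<Rightarrow> real" and p q :: real
  assumes pq: "p \<le> q" and hp: "p \<le> \<phi> p" and hq: "\<phi> q \<le> q"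
    and mono: "\<And>x y. p \<le> x \<Longrightarrow> x \<le> y \<Longrightarrow> y \<le> q \<Longrightarrow> \<phi> x \<le> \<phi> y"
  shows "\<exists>y. p \<le> y \<and> y \<le> q \<and> \<phi> y = y"
proof -
  define X where "X = {x. p \<le> x \<and> x \<le> q \<and> x \<le> \<phi> x}"
  define y where "y = Sup X"
  have pX: "p \<in> X" using pq hp by (simp add: X_def)
  have bdd: "bdd_above X" unfolding X_def by (rule bdd_aboveI[of _ q]) auto
  have ub: "x \<le> y" if "x \<in> X" for x using cSup_upper[OF that bdd] y_def by simp
  have py: "p \<le> y" using ub pX by simp
  have yq: "y \<le> q" unfolding y_def using pX by (intro cSup_least) (auto simp: X_def)
  have "x \<le> \<phi> y" if "x \<in> X" for x
  proof -
    have "x \<le> \<phi> x" "p \<le> x" using that by (auto simp: X_def)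
    moreover have "\<phi> x \<le> \<phi> y" using mono[of x y] \<open>p \<le> x\<close> ub[OF that] yq by simp
    ultimately show ?thesis by simp
  qed
  hence yphi: "y \<le> \<phi> y" unfolding y_def using pX by (intro cSup_least) auto
  have "\<phi> y \<le> q" using mono[of y q] py yq hq by simp
  moreover have "\<phi> y \<le> \<phi> (\<phi> y)" using mono[of y "\<phi> y"] py yphi \<open>\<phi> y \<le> q\<close> by simp
  ultimately have "\<phi> y \<in> X" using py yphi by (simp add: X_def)
  hence "\<phi> y \<le> y" using ub by simp
  thus ?thesis using py yq yphi by (intro exI[of _ y]) simp
qed

lemma sup_other:
  fixes P Q I :: "real set" and g :: "real \<Rightarrow> real"
  assumes PQ: "P \<union> Q = I" "P \<inter> Q = {}"
   and dP0: "\<forall>a\<in>I. \<forall>b\<in>I. a<b \<longrightarrow> (\<exists>p\<in>P. a<p \<and> p<b)"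
   and lo0: "\<forall>a\<in>I. \<exists>b\<in>I. b<a" and hi0: "\<forall>a\<in>I. \<exists>b\<in>I. a<b"
   and cvx0: "\<forall>a\<in>I. \<forall>c\<in>I. \<forall>b. a<b \<and> b<c \<longrightarrow> b\<in>I"
   and bij: "bij_betw g P Q" and sm0: "\<forall>a\<in>P. \<forall>b\<in>P. a<b \<longrightarrow> g a < g b"
   and x: "x\<in>Q"
  shows "Sup (g ` {p\<in>P. p<x}) \<in> P \<and> (\<forall>p\<in>P. p<x \<longrightarrow> g p < Sup (g ` {p\<in>P. p<x}))
         \<and> (\<forall>p\<in>P. x<p \<longrightarrow> Sup (g ` {p\<in>P. p<x}) < g p)"
proof -
  have dP: "\<And>a b. a\<in>I \<Longrightarrow> b\<in>I \<Longrightarrow> a<b \<Longrightarrow> \<exists>p\<in>P. a<p \<and> p<b" using dP0 by blast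
  have lo: "\<And>a. a\<in>I \<Longrightarrow> \<exists>b\<in>I. b<a" using lo0 by blast
  have hi: "\<And>a. a\<in>I \<Longrightarrow> \<exists>b\<in>I. a<b" using hi0 by blast
  have cvx: "\<And>a b c. a\<in>I \<Longrightarrow> c\<in>I \<Longrightarrow> a<b \<Longrightarrow> b<c \<Longrightarrow> b\<in>I" using cvx0 by blast
  have sm: "\<And>a b. a\<in>P \<Longrightarrow> b\<in>P \<Longrightarrow> a<b \<Longrightarrow> g a < g b" using sm0 by blast
  define X where "X = g ` {p\<in>P. p<x}"
  define sg where "sg = Sup X"
  have xI: "x \<in> I" using x PQ by auto
  obtain b0 where b0: "b0\<in>I" "b0<x" using lo[OF xI] by auto
  obtain p0 where p0: "p0\<in>P" "b0<p0" "p0<x" using dP[OF b0(1) xI b0(2)] by auto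
  obtain b1 where b1: "b1\<in>I" "x<b1" using hi[OF xI] by auto
  obtain p1 where p1: "p1\<in>P" "x<p1" "p1<b1" using dP[OF xI b1(1) b1(2)] by auto
  have gQ: "g p \<in> Q" if "p \<in> P" for p using bij that by (auto simp: bij_betw_def)
  have Xne: "X \<noteq> {}" using p0 by (auto simp: X_def)
  have bdd: "bdd_above X" unfolding X_def
    using p1 by (intro bdd_aboveI[of _ "g p1"]) (auto intro!: less_imp_le sm)
  have le1: "g p \<le> sg" if "p\<in>P" "p<x" for p
    unfolding sg_def using that bdd by (intro cSup_upper) (auto simp: X_def)
  have le2: "sg \<le> g p" if "p\<in>P" "x<p" for p
    unfolding sg_def using Xne that by (intro cSup_least) (auto simp: X_def intro!: less_imp_le sm)
  have "sg \<in> I"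
  proof -
    have a: "g p0 \<le> sg" "sg \<le> g p1" using le1 p0 le2 p1 by auto
    have gI: "g p0 \<in> I" "g p1 \<in> I" using gQ p0 p1 PQ by auto
    show ?thesis
    proof (cases "g p0 < sg \<and> sg < g p1")
      case True thus ?thesis using cvx[of "g p0" "g p1" sg] gI by blast
    next
      case False hence "sg = g p0 \<or> sg = g p1" using a by auto
      thus ?thesis using gI by auto
    qed
  qed
  moreover have "sg \<notin> Q"
  proof
    assume "sg \<in> Q"
    then obtain s0 where s0: "s0 \<in> P" "sg = g s0" using bij by (auto simp: bij_betw_def)
    have s0I: "s0 \<in> I" using s0 PQ by auto
    have "s0 \<noteq> x" using s0 x PQ by auto
    then consider "s0 < x" | "x < s0" by linarith
    thus False
    proof cases
      case 1
      then obtain p where "p\<in>P" "s0<p" "p<x" using dP[OF s0I xI] by auto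
      thus False using le1[of p] sm[of s0 p] s0 by auto
    next
      case 2
      then obtain p where "p\<in>P" "x<p" "p<s0" using dP[OF xI s0I] by auto
      thus False using le2[of p] sm[of p s0] s0 by auto
    qed
  qed
  ultimately have sP: "sg \<in> P" using PQ by auto
  have ne: "g p \<noteq> sg" if "p \<in> P" for p using gQ[OF that] sP PQ by auto
  have s1: "\<forall>p\<in>P. p<x \<longrightarrow> g p < sg"
  proof (intro ballI impI)
    fix p assume "p\<in>P" "p<x" thus "g p < sg" using le1[of p] ne[of p] by (simp add: less_le)
  qed
  have s2: "\<forall>p\<in>P. x<p \<longrightarrow> sg < g p"
  proof (intro ballI impI)
    fix p assume "p\<in>P" "x<p" thus "sg < g p" using le2[of p] ne[of p] by (simp add: less_le)
  qed
  have eq: "Sup (g ` {p\<in>P. p<x}) = sg" by (simp add: sg_def X_def)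
  show ?thesis unfolding eq using sP s1 s2 by blast
qed

lemma extend:
  fixes P Q I :: "real set" and g :: "real \<Rightarrow> real"
  assumes PQ: "P \<union> Q = I" "P \<inter> Q = {}"
   and dP0: "\<forall>a\<in>I. \<forall>b\<in>I. a<b \<longrightarrow> (\<exists>p\<in>P. a<p \<and> p<b)"
   and dQ0: "\<forall>a\<in>I. \<forall>b\<in>I. a<b \<longrightarrow> (\<exists>p\<in>Q. a<p \<and> p<b)"
   and lo0: "\<forall>a\<in>I. \<exists>b\<in>I. b<a" and hi0: "\<forall>a\<in>I. \<exists>b\<in>I. a<b"
   and cvx0: "\<forall>a\<in>I. \<forall>c\<in>I. \<forall>b. a<b \<and> b<c \<longrightarrow> b\<in>I"
   and bij: "bij_betw g P Q" and sm0: "\<forall>a\<in>P. \<forall>b\<in>P. a<b \<longrightarrow> g a < g b"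
  shows "\<exists>F. bij_betw F I I \<and> (\<forall>a\<in>I. \<forall>b\<in>I. a<b \<longrightarrow> F a < F b) \<and> F`P = Q \<and> F`Q = P"
proof -
  have dP: "\<And>a b. a\<in>I \<Longrightarrow> b\<in>I \<Longrightarrow> a<b \<Longrightarrow> \<exists>p\<in>P. a<p \<and> p<b" using dP0 by blast
  have lo: "\<And>a. a\<in>I \<Longrightarrow> \<exists>b\<in>I. b<a" using lo0 by blast
  have hi: "\<And>a. a\<in>I \<Longrightarrow> \<exists>b\<in>I. a<b" using hi0 by blast
  have cvx: "\<And>a b c. a\<in>I \<Longrightarrow> c\<in>I \<Longrightarrow> a<b \<Longrightarrow> b<c \<Longrightarrow> b\<in>I" using cvx0 by blast
  have sm: "\<And>a b. a\<in>P \<Longrightarrow> b\<in>P \<Longrightarrow> a<b \<Longrightarrow> g a < g b" using sm0 by blast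
  have dQ: "\<And>a b. a\<in>I \<Longrightarrow> b\<in>I \<Longrightarrow> a<b \<Longrightarrow> \<exists>p\<in>Q. a<p \<and> p<b" using dQ0 by blast
  define F where "F x = (if x\<in>P then g x else Sup (g ` {p\<in>P. p<x}))" for x
  note so = sup_other[OF PQ dP0 lo0 hi0 cvx0 bij sm0]
  have FP: "F x = g x" "F x \<in> Q" if "x\<in>P" for x using that bij by (auto simp: F_def bij_betw_def)
  have FQ: "F x = Sup (g ` {p\<in>P. p<x})" "F x \<in> P" if "x\<in>Q" for x
    using so[OF that] that PQ by (auto simp: F_def)
  have m1: "F a < F b" if "a\<in>P" "b\<in>Q" "a<b" for a b
    using so[OF that(2)] that FP FQ by auto
  have m2: "F a < F b" if "a\<in>Q" "b\<in>P" "a<b" for a b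
    using so[OF that(1)] that FP FQ by auto
  have mono: "F a < F b" if ab: "a\<in>I" "b\<in>I" "a<b" for a b
  proof -
    consider "a\<in>P" "b\<in>P" | "a\<in>P" "b\<in>Q" | "a\<in>Q" "b\<in>P" | "a\<in>Q" "b\<in>Q" using ab PQ by auto
    thus ?thesis
    proof cases
      case 1 thus ?thesis using FP sm ab by auto
    next
      case 2 thus ?thesis using m1 ab by auto
    next
      case 3 thus ?thesis using m2 ab by auto
    next
      case 4
      then obtain p where "p\<in>P" "a<p" "p<b" using dP ab by blast
      thus ?thesis using m1 m2 4 by (meson order.strict_trans)
    qed
  qed
  define g' where "g' = inv_into P g"
  have bij': "bij_betw g' Q P" unfolding g'_def by (rule bij_betw_inv_into[OF bij])
  have gg': "g (g' u) = u" if "u\<in>Q" for u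
    using that bij unfolding g'_def by (simp add: bij_betw_def f_inv_into_f)
  have g'P: "g' u \<in> P" if "u\<in>Q" for u using bij' that by (auto simp: bij_betw_def)
  have sm': "g' u < g' v" if "u\<in>Q" "v\<in>Q" "u<v" for u v
  proof (rule ccontr)
    assume "\<not> g' u < g' v"
    hence "g' v < g' u \<or> g' v = g' u" by auto
    thus False
    proof
      assume "g' v < g' u"
      hence "g (g' v) < g (g' u)" using sm g'P that by auto
      thus False using gg' that by auto
    next
      assume "g' v = g' u"
      hence "g (g' v) = g (g' u)" by simp
      thus False using gg' that by auto
    qed
  qed
  have sm'': "\<forall>a\<in>Q. \<forall>b\<in>Q. a<b \<longrightarrow> g' a < g' b" using sm' by blast
  have PQ': "Q \<union> P = I" "Q \<inter> P = {}" using PQ by auto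
  note so' = sup_other[OF PQ' dQ0 lo0 hi0 cvx0 bij' sm'']
  have surjP: "\<exists>x\<in>Q. F x = y" if yP: "y\<in>P" for y
  proof -
    define t where "t = Sup (g' ` {u\<in>Q. u<y})"
    have tQ: "t \<in> Q" and lt: "\<And>u. u\<in>Q \<Longrightarrow> u<y \<Longrightarrow> g' u < t"
      and gt: "\<And>u. u\<in>Q \<Longrightarrow> y<u \<Longrightarrow> t < g' u"
      using so'[OF yP] unfolding t_def by auto
    have FtI: "F t \<in> I" "y \<in> I" using FQ(2)[OF tQ] yP PQ by auto
    have "\<not> F t < y"
    proof
      assume a: "F t < y"
      then obtain u where u: "u\<in>Q" "F t < u" "u < y" using dQ FtI by blast
      have "F (g' u) < F t" using m1[OF g'P[OF u(1)] tQ lt[OF u(1,3)]] .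
      thus False using FP(1)[OF g'P[OF u(1)]] gg'[OF u(1)] u by auto
    qed
    moreover have "\<not> y < F t"
    proof
      assume a: "y < F t"
      then obtain u where u: "u\<in>Q" "y < u" "u < F t" using dQ FtI by blast
      have "F t < F (g' u)" using m2[OF tQ g'P[OF u(1)] gt[OF u(1,2)]] .
      thus False using FP(1)[OF g'P[OF u(1)]] gg'[OF u(1)] u by auto
    qed
    ultimately show ?thesis using tQ by (intro bexI[of _ t]) auto
  qed
  have surjQ: "\<exists>x\<in>P. F x = y" if "y\<in>Q" for y
    using that bij FP(1) by (auto simp: bij_betw_def)
  have i1: "F`P = Q" using FP surjQ by force
  have i2: "F`Q = P" using FQ(2) surjP by force
  have inj: "inj_on F I"
    by (rule inj_onI) (metis linorder_neq_iff mono order.strict_implies_not_eq)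
  have "F`I = I" using i1 i2 PQ by (metis image_Un sup_commute)
  hence bF: "bij_betw F I I" using inj by (simp add: bij_betw_def)
  have m': "\<forall>a\<in>I. \<forall>b\<in>I. a<b \<longrightarrow> F a < F b" using mono by blast
  show ?thesis by (rule exI[of _ F], intro conjI, fact bF, fact m', fact i1, fact i2)
qed


lemma sm_le:
  fixes h :: "real \<Rightarrow> real"
  assumes "\<forall>a\<in>I. \<forall>b\<in>I. a<b \<longrightarrow> h a < h b" "x\<in>I" "y\<in>I" "x \<le> y"
  shows "h x \<le> h y"
proof (cases "x = y")
  case True thus ?thesis by simp
next
  case False hence "x < y" using assms(4) by simp
  hence "h x < h y" using assms(1-3) by blast
  thus ?thesis by simp
qed

lemma sign_lemma:
  fixes h :: "real \<Rightarrow> real" and I :: "real set"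
  assumes bij: "bij_betw h I I" and sm: "\<forall>a\<in>I. \<forall>b\<in>I. a<b \<longrightarrow> h a < h b"
    and nf: "\<forall>y\<in>I. h y \<noteq> y"
    and cvx0: "\<forall>a\<in>I. \<forall>c\<in>I. \<forall>b. a<b \<and> b<c \<longrightarrow> b\<in>I"
  shows "(\<forall>y\<in>I. y < h y) \<or> (\<forall>y\<in>I. h y < y)"
proof (rule ccontr)
  have cv: "b \<in> I" if "a\<in>I" "c\<in>I" "a \<le> b" "b \<le> c" for a b c
  proof (cases "a < b \<and> b < c")
    case True thus ?thesis using cvx0 that by blast
  next
    case False hence "b = a \<or> b = c" using that by auto
    thus ?thesis using that by auto
  qed
  have hI: "h y \<in> I" if "y \<in> I" for y using bij that by (auto simp: bij_betw_def)
  assume "\<not> ?thesis"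
  then obtain p q where p: "p\<in>I" "h p < p" and q: "q\<in>I" "q < h q"
    using nf by (metis linorder_neq_iff)
  consider "q < p" | "p < q" | "p = q" by linarith
  thus False
  proof cases
    case 1
    have "\<exists>y. q \<le> y \<and> y \<le> p \<and> h y = y"
      apply (rule tarski_fp)
      using 1 p q apply auto[3]
      subgoal for x y
        apply (rule sm_le[OF sm])
        using cv[OF q(1) p(1), of x] cv[OF q(1) p(1), of y] by auto
      done
    thus False using nf cv[OF q(1) p(1)] by auto
  next
    case 2
    define k where "k = inv_into I h"
    have hk: "h (k y) = y" if "y\<in>I" for y
      using that bij unfolding k_def by (simp add: bij_betw_def f_inv_into_f)
    have kI: "k y \<in> I" if "y\<in>I" for y
      using that bij unfolding k_def by (metis bij_betw_def inv_into_into)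
    have kh: "k (h y) = y" if "y\<in>I" for y
      using that bij unfolding k_def by (simp add: bij_betw_def inv_into_f_f)
    have kmono: "k x \<le> k y" if "x\<in>I" "y\<in>I" "x \<le> y" for x y
    proof (rule ccontr)
      assume "\<not> k x \<le> k y"
      hence "h (k y) < h (k x)" using sm kI that by auto
      thus False using hk that by auto
    qed
    have uv: "h p < h q" using sm p q 2 by auto
    have "\<exists>y. h p \<le> y \<and> y \<le> h q \<and> k y = y"
      apply (rule tarski_fp)
      using uv apply simp
      using kh p apply simp
      using kh q apply simp
      subgoal for x y
        apply (rule kmono)
        using cv[OF hI[OF p(1)] hI[OF q(1)], of x] cv[OF hI[OF p(1)] hI[OF q(1)], of y] by auto
      done
    then obtain y where y: "h p \<le> y" "y \<le> h q" "k y = y" by blast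
    have "y \<in> I" using cv[OF hI[OF p(1)] hI[OF q(1)]] y by auto
    thus False using hk[of y] y nf by auto
  next
    case 3 thus False using p q by auto
  qed
qed

lemma drift:
  fixes h :: "real \<Rightarrow> real" and I P Q :: "real set" and d :: bool
  assumes bij: "bij_betw h I I" and sm: "\<forall>a\<in>I. \<forall>b\<in>I. a<b \<longrightarrow> h a < h b"
    and PQ: "P \<union> Q = I" "P \<inter> Q = {}" and hP: "h`P = Q" and hQ: "h`Q = P"
    and cvx0: "\<forall>a\<in>I. \<forall>c\<in>I. \<forall>b. a<b \<and> b<c \<longrightarrow> b\<in>I"
  shows "\<exists>h'. bij_betw h' I I \<and> (\<forall>a\<in>I. \<forall>b\<in>I. a<b \<longrightarrow> h' a < h' b) \<and> h'`P = Q \<and> h'`Q = P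
     \<and> (\<forall>y\<in>I. (y < h' y \<longleftrightarrow> d) \<and> h' y \<noteq> y)"
proof -
  have nf: "\<forall>y\<in>I. h y \<noteq> y"
  proof
    fix y assume "y \<in> I"
    then consider "y \<in> P" | "y \<in> Q" using PQ by auto
    thus "h y \<noteq> y"
    proof cases
      case 1
      have hy: "h y \<in> Q" using hP 1 by blast
      show ?thesis
      proof
        assume "h y = y"
        hence "y \<in> Q" using hy by simp
        thus False using 1 PQ(2) by auto
      qed
    next
      case 2
      have hy: "h y \<in> P" using hQ 2 by blast
      show ?thesis
      proof
        assume "h y = y"
        hence "y \<in> P" using hy by simp
        thus False using 2 PQ(2) by auto
      qed
    qed
  qed
  define k where "k = inv_into I h"
  have hk: "h (k y) = y" if "y\<in>I" for y
    using that bij unfolding k_def by (simp add: bij_betw_def f_inv_into_f)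
  have kI: "k y \<in> I" if "y\<in>I" for y
    using that bij unfolding k_def by (metis bij_betw_def inv_into_into)
  have kh: "k (h y) = y" if "y\<in>I" for y
    using that bij unfolding k_def by (simp add: bij_betw_def inv_into_f_f)
  have kbij: "bij_betw k I I" unfolding k_def by (rule bij_betw_inv_into[OF bij])
  have ksm: "\<forall>a\<in>I. \<forall>b\<in>I. a<b \<longrightarrow> k a < k b"
  proof (intro ballI impI)
    fix a b assume ab: "a\<in>I" "b\<in>I" "a<b"
    show "k a < k b"
    proof (rule ccontr)
      assume "\<not> k a < k b"
      hence "k b < k a \<or> k b = k a" by auto
      hence "h (k b) < h (k a) \<or> h (k b) = h (k a)" using sm kI ab by auto
      thus False using hk ab by auto
    qed
  qed
  have kP: "k`P = Q"
  proof
    show "k`P \<subseteq> Q"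
    proof
      fix z assume "z \<in> k`P"
      then obtain y where y: "y\<in>P" "z = k y" by auto
      then obtain x where x: "x\<in>Q" "y = h x" using hQ by auto
      have "x \<in> I" using x PQ by auto
      thus "z \<in> Q" using kh x y by auto
    qed
    show "Q \<subseteq> k`P"
    proof
      fix x assume x: "x \<in> Q"
      hence "x \<in> I" using PQ by auto
      hence "k (h x) = x" using kh by auto
      moreover have "h x \<in> P" using hQ x by auto
      ultimately show "x \<in> k`P" by (metis image_eqI)
    qed
  qed
  have kQ: "k`Q = P"
  proof
    show "k`Q \<subseteq> P"
    proof
      fix z assume "z \<in> k`Q"
      then obtain y where y: "y\<in>Q" "z = k y" by auto
      then obtain x where x: "x\<in>P" "y = h x" using hP by auto
      have "x \<in> I" using x PQ by auto
      thus "z \<in> P" using kh x y by auto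
    qed
    show "P \<subseteq> k`Q"
    proof
      fix x assume x: "x \<in> P"
      hence "x \<in> I" using PQ by auto
      hence "k (h x) = x" using kh by auto
      moreover have "h x \<in> Q" using hP x by auto
      ultimately show "x \<in> k`Q" by (metis image_eqI)
    qed
  qed
  have knf: "\<forall>y\<in>I. k y \<noteq> y"
  proof
    fix y assume y: "y\<in>I"
    show "k y \<noteq> y"
    proof
      assume "k y = y"
      hence "h y = y" using hk[OF y] by simp
      thus False using nf y by auto
    qed
  qed
  from sign_lemma[OF bij sm nf cvx0]
  consider "\<forall>y\<in>I. y < h y" | "\<forall>y\<in>I. h y < y" by blast
  thus ?thesis
  proof cases
    case 1
    have k1: "\<forall>y\<in>I. k y < y"
    proof
      fix y assume y: "y\<in>I"
      have "k y < h (k y)" using 1 kI[OF y] by blast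
      thus "k y < y" using hk[OF y] by simp
    qed
    show ?thesis
    proof (cases d)
      case True thus ?thesis using 1 bij sm hP hQ nf by (intro exI[of _ h]) auto
    next
      case False thus ?thesis using k1 kbij ksm kP kQ knf by (intro exI[of _ k]) auto
    qed
  next
    case 2
    have k1: "\<forall>y\<in>I. y < k y"
    proof
      fix y assume y: "y\<in>I"
      have "h (k y) < k y" using 2 kI[OF y] by blast
      thus "y < k y" using hk[OF y] by simp
    qed
    show ?thesis
    proof (cases d)
      case False thus ?thesis using 2 bij sm hP hQ nf by (intro exI[of _ h]) force
    next
      case True thus ?thesis using k1 kbij ksm kP kQ knf by (intro exI[of _ k]) auto
    qed
  qed
qed

lemma orbit:
  fixes \<mu> :: "real \<Rightarrow> real" and c e z w :: real
  assumes maps: "\<forall>y\<in>{c<..<e}. \<mu> y \<in> {c<..<e}"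
    and surj: "\<forall>y\<in>{c<..<e}. \<exists>x\<in>{c<..<e}. \<mu> x = y"
    and sm: "\<forall>a\<in>{c<..<e}. \<forall>b\<in>{c<..<e}. a<b \<longrightarrow> \<mu> a < \<mu> b"
    and up: "\<forall>y\<in>{c<..<e}. y < \<mu> y"
    and z: "z \<in> {c<..<e}" and w: "w < e"
  shows "\<exists>n. w \<le> (\<mu>^^n) z"
proof (rule ccontr)
  assume "\<not> ?thesis"
  hence lw: "\<And>n. (\<mu>^^n) z < w" by (simp add: not_le)
  have iJ: "(\<mu>^^n) z \<in> {c<..<e}" for n by (induction n) (use z maps in auto)
  define S where "S = range (\<lambda>n. (\<mu>^^n) z)"
  define L where "L = Sup S"
  have bdd: "bdd_above S" unfolding S_def using lw by (intro bdd_aboveI[of _ w]) (auto intro: less_imp_le)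
  have Sne: "S \<noteq> {}" by (simp add: S_def)
  have zL: "z \<le> L" unfolding L_def using bdd by (intro cSup_upper) (auto simp: S_def intro: range_eqI[of _ _ 0])
  have Lw: "L \<le> w" unfolding L_def using Sne lw by (intro cSup_least) (auto simp: S_def intro: less_imp_le)
  have LJ: "L \<in> {c<..<e}" using zL Lw z w by auto
  obtain x where x: "x \<in> {c<..<e}" "\<mu> x = L" using surj LJ by blast
  have "x < L" using up x by auto
  then obtain s where s: "s \<in> S" "x < s" using less_cSupD[OF Sne] unfolding L_def by blast
  then obtain n where n: "s = (\<mu>^^n) z" by (auto simp: S_def)
  have sJ: "s \<in> {c<..<e}" using n iJ by simp
  have "L < \<mu> s" using sm x(1) sJ s(2) x(2) by blast
  moreover have "\<mu> s \<le> L" unfolding L_def using bdd n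
    by (intro cSup_upper) (auto simp: S_def intro: range_eqI[of _ _ "Suc n"])
  ultimately show False by simp
qed

lemma iter_props:
  fixes \<mu> :: "real \<Rightarrow> real" and J A B :: "real set"
  assumes maps: "\<forall>y\<in>J. \<mu> y \<in> J" and sm: "\<forall>a\<in>J. \<forall>b\<in>J. a<b \<longrightarrow> \<mu> a < \<mu> b"
    and pA: "\<forall>y\<in>J. y\<in>A \<longrightarrow> \<mu> y \<in> A" and pB: "\<forall>y\<in>J. y\<in>B \<longrightarrow> \<mu> y \<in> B"
  shows "\<forall>y\<in>J. (\<mu>^^n) y \<in> J \<and> (y\<in>A \<longrightarrow> (\<mu>^^n) y\<in>A) \<and> (y\<in>B \<longrightarrow> (\<mu>^^n) y \<in> B)"
    and "\<forall>a\<in>J. \<forall>b\<in>J. a \<le> b \<longrightarrow> (\<mu>^^n) a \<le> (\<mu>^^n) b"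
proof -
  have i1: "\<forall>y\<in>J. (\<mu>^^m) y \<in> J \<and> (y\<in>A \<longrightarrow> (\<mu>^^m) y\<in>A) \<and> (y\<in>B \<longrightarrow> (\<mu>^^m) y \<in> B)" for m
    by (induction m) (use maps pA pB in auto)
  show "\<forall>y\<in>J. (\<mu>^^n) y \<in> J \<and> (y\<in>A \<longrightarrow> (\<mu>^^n) y\<in>A) \<and> (y\<in>B \<longrightarrow> (\<mu>^^n) y \<in> B)"
    by (rule i1)
  show "\<forall>a\<in>J. \<forall>b\<in>J. a \<le> b \<longrightarrow> (\<mu>^^n) a \<le> (\<mu>^^n) b"
  proof (induction n)
    case 0 thus ?case by simp
  next
    case (Suc n)
    show ?case
    proof (intro ballI impI)
      fix a b assume ab: "a\<in>J" "b\<in>J" "a\<le>b"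
      have "(\<mu>^^n) a \<le> (\<mu>^^n) b" using Suc ab by auto
      moreover have "(\<mu>^^n) a \<in> J" "(\<mu>^^n) b \<in> J" using i1 ab by auto
      ultimately show "(\<mu>^^Suc n) a \<le> (\<mu>^^Suc n) b" using sm
        by (metis funpow.simps(2) o_apply order.order_iff_strict)
    qed
  qed
qed


theorem theorem1:
  fixes A B :: "real set"
  assumes "A \<union> B = UNIV" and "A \<inter> B = {}"
  shows "\<exists>a b :: ereal. a < b \<and>
           \<not> order_isomorphic (A \<inter> open_interval_ext a b) (B \<inter> open_interval_ext a b)"
proof (rule ccontr)
  note AB = assms
  assume "\<not> ?thesis"
  hence H: "\<And>a b::ereal. a<b \<Longrightarrow> order_isomorphic (A \<inter> open_interval_ext a b) (B \<inter> open_interval_ext a b)"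
    by blast
  have oie: "open_interval_ext (ereal c) (ereal e) = {c<..<e}" for c e
    by (auto simp: open_interval_ext_def)
  have oieU: "open_interval_ext (-\<infinity>) \<infinity> = UNIV" by (auto simp: open_interval_ext_def)
  have isoJ: "\<exists>g. bij_betw g (A\<inter>{c<..<e}) (B\<inter>{c<..<e}) \<and>
     (\<forall>x\<in>A\<inter>{c<..<e}. \<forall>y\<in>A\<inter>{c<..<e}. x<y \<longrightarrow> g x < g y)" if "c<e" for c e
    using H[of "ereal c" "ereal e"] that oie by (simp add: order_isomorphic_def)
  have isoU: "\<exists>g. bij_betw g A B \<and> (\<forall>x\<in>A. \<forall>y\<in>A. x<y \<longrightarrow> g x < g y)"
    using H[of "-\<infinity>" "\<infinity>"] oieU by (simp add: order_isomorphic_def)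
  have dens: "(\<exists>a\<in>A. x<a \<and> a<y) \<and> (\<exists>b\<in>B. x<b \<and> b<y)" if xy: "x<y" for x y
  proof -
    obtain g where g: "bij_betw g (A\<inter>{x<..<y}) (B\<inter>{x<..<y})" using isoJ[OF xy] by blast
    have m: "(x+y)/2 \<in> {x<..<y}" using xy by auto
    have "A\<inter>{x<..<y} \<noteq> {}"
    proof
      assume e: "A\<inter>{x<..<y} = {}"
      hence "B\<inter>{x<..<y} = {}" using g by (simp add: bij_betw_def)
      thus False using e m AB by blast
    qed
    moreover have "B\<inter>{x<..<y} \<noteq> {}"
    proof
      assume e: "B\<inter>{x<..<y} = {}"
      hence "A\<inter>{x<..<y} = {}" using g by (metis bij_betw_empty2)
      thus False using e m AB by blast
    qed
    ultimately show ?thesis by auto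
  qed
  obtain g0 where g0: "bij_betw g0 A B" "\<forall>x\<in>A. \<forall>y\<in>A. x<y \<longrightarrow> g0 x < g0 y" using isoU by blast
  have cvU: "\<forall>a\<in>(UNIV::real set). \<forall>c\<in>UNIV. \<forall>b. a<b \<and> b<c \<longrightarrow> b\<in>UNIV" by simp
  obtain F0 where F0: "bij_betw F0 UNIV UNIV" "\<forall>a\<in>UNIV. \<forall>b\<in>UNIV. a<b \<longrightarrow> F0 a < F0 b" "F0`A = B" "F0`B = A"
  proof -
    have dA0: "\<forall>a\<in>(UNIV::real set). \<forall>b\<in>UNIV. a<b \<longrightarrow> (\<exists>p\<in>A. a<p \<and> p<b)" using dens by blast
    have dB0: "\<forall>a\<in>(UNIV::real set). \<forall>b\<in>UNIV. a<b \<longrightarrow> (\<exists>p\<in>B. a<p \<and> p<b)" using dens by blast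
    have lo: "\<forall>a\<in>(UNIV::real set). \<exists>b\<in>UNIV. b<a"
    proof
      fix a :: real show "\<exists>b\<in>UNIV. b<a" by (intro bexI[of _ "a-1"]) auto
    qed
    have hi: "\<forall>a\<in>(UNIV::real set). \<exists>b\<in>UNIV. a<b"
    proof
      fix a :: real show "\<exists>b\<in>UNIV. a<b" by (intro bexI[of _ "a+1"]) auto
    qed
    show ?thesis using extend[OF AB dA0 dB0 lo hi cvU g0] that by blast
  qed
  obtain F where F: "bij_betw F UNIV UNIV" "\<forall>a\<in>UNIV. \<forall>b\<in>UNIV. a<b \<longrightarrow> F a < F b" "F`A = B" "F`B = A"
     "\<forall>y\<in>UNIV. (y < F y \<longleftrightarrow> False) \<and> F y \<noteq> y"
    using drift[OF F0(1,2) AB F0(3,4) cvU, of False] by blast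
  have Fl: "F y < y" for y using F(5)[rule_format, of y] by auto
  have Fm: "F x \<le> F y" if "x \<le> y" for x y using sm_le[OF F(2)] that by simp
  define c where "c = F (F 0) - 1"
  define J where "J = {c<..<(0::real)}"
  have F0J: "F 0 \<in> J" and FFJ: "F (F 0) \<in> J" using Fl[of 0] Fl[of "F 0"] by (auto simp: J_def c_def)
  have c0: "c < 0" using F0J by (simp add: J_def)
  obtain g1 where g1: "bij_betw g1 (A\<inter>J) (B\<inter>J)" "\<forall>x\<in>A\<inter>J. \<forall>y\<in>A\<inter>J. x<y \<longrightarrow> g1 x < g1 y"
    using isoJ[OF c0] unfolding J_def by blast
  have PQJ: "A\<inter>J \<union> B\<inter>J = J" "A\<inter>J \<inter> (B\<inter>J) = {}" using AB by auto
  have cvJ: "\<forall>a\<in>J. \<forall>c\<in>J. \<forall>b. a<b \<and> b<c \<longrightarrow> b\<in>J" by (auto simp: J_def)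
  have dA: "\<forall>a\<in>J. \<forall>b\<in>J. a<b \<longrightarrow> (\<exists>p\<in>A\<inter>J. a<p \<and> p<b)"
  proof (intro ballI impI)
    fix a b assume "a\<in>J" "b\<in>J" "a<b"
    then obtain p where "p\<in>A" "a<p" "p<b" using dens by blast
    thus "\<exists>p\<in>A\<inter>J. a<p \<and> p<b" using \<open>a\<in>J\<close> \<open>b\<in>J\<close> by (intro bexI[of _ p]) (auto simp: J_def)
  qed
  have dB: "\<forall>a\<in>J. \<forall>b\<in>J. a<b \<longrightarrow> (\<exists>p\<in>B\<inter>J. a<p \<and> p<b)"
  proof (intro ballI impI)
    fix a b assume "a\<in>J" "b\<in>J" "a<b"
    then obtain p where "p\<in>B" "a<p" "p<b" using dens by blast
    thus "\<exists>p\<in>B\<inter>J. a<p \<and> p<b" using \<open>a\<in>J\<close> \<open>b\<in>J\<close> by (intro bexI[of _ p]) (auto simp: J_def)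
  qed
  have loJ: "\<forall>a\<in>J. \<exists>b\<in>J. b<a"
  proof
    fix a assume "a\<in>J" thus "\<exists>b\<in>J. b<a" by (intro bexI[of _ "(c+a)/2"]) (auto simp: J_def)
  qed
  have hiJ: "\<forall>a\<in>J. \<exists>b\<in>J. a<b"
  proof
    fix a assume "a\<in>J" thus "\<exists>b\<in>J. a<b" by (intro bexI[of _ "a/2"]) (auto simp: J_def)
  qed
  obtain k0 where k0: "bij_betw k0 J J" "\<forall>a\<in>J. \<forall>b\<in>J. a<b \<longrightarrow> k0 a < k0 b" "k0`(A\<inter>J) = B\<inter>J" "k0`(B\<inter>J) = A\<inter>J"
    using extend[OF PQJ dA dB loJ hiJ cvJ g1] by blast
  obtain k where k: "bij_betw k J J" "\<forall>a\<in>J. \<forall>b\<in>J. a<b \<longrightarrow> k a < k b" "k`(A\<inter>J) = B\<inter>J" "k`(B\<inter>J) = A\<inter>J"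
     "\<forall>y\<in>J. (y < k y \<longleftrightarrow> True) \<and> k y \<noteq> y"
    using drift[OF k0(1,2) PQJ k0(3,4) cvJ, of True] by blast
  have kJ: "k y \<in> J" if "y\<in>J" for y using k(1) that by (auto simp: bij_betw_def)
  have ksurj: "\<exists>x\<in>J. k x = y" if "y\<in>J" for y
  proof -
    have "y \<in> k ` J" using k(1) that by (simp add: bij_betw_def)
    thus ?thesis by blast
  qed
  have kA: "k y \<in> B" if "y\<in>J" "y\<in>A" for y using k(3) that by auto
  have kB: "k y \<in> A" if "y\<in>J" "y\<in>B" for y using k(4) that by auto
  define \<mu> where "\<mu> y = k (k y)" for y
  have mJ: "\<forall>y\<in>J. \<mu> y \<in> J" using kJ by (simp add: \<mu>_def)
  have msurj: "\<forall>y\<in>J. \<exists>x\<in>J. \<mu> x = y"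
  proof
    fix y assume "y\<in>J"
    then obtain x1 where x1: "x1\<in>J" "k x1 = y" using ksurj by blast
    then obtain x2 where x2: "x2\<in>J" "k x2 = x1" using ksurj by blast
    show "\<exists>x\<in>J. \<mu> x = y" using x1 x2 by (intro bexI[of _ x2]) (simp_all add: \<mu>_def)
  qed
  have msm: "\<forall>a\<in>J. \<forall>b\<in>J. a<b \<longrightarrow> \<mu> a < \<mu> b" unfolding \<mu>_def using k(2) kJ by auto
  have mup: "\<forall>y\<in>J. y < \<mu> y"
  proof
    fix y assume y: "y\<in>J"
    have "y < k y" using k(5) y by blast
    moreover have "k y < k (k y)" using k(5) kJ[OF y] by blast
    ultimately show "y < \<mu> y" by (simp add: \<mu>_def)
  qed
  have mA: "\<forall>y\<in>J. y\<in>A \<longrightarrow> \<mu> y \<in> A" unfolding \<mu>_def using kA kB kJ by auto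
  have mB: "\<forall>y\<in>J. y\<in>B \<longrightarrow> \<mu> y \<in> B" unfolding \<mu>_def using kA kB kJ by auto
  obtain n where n: "F 0 \<le> (\<mu>^^n) (F (F 0))"
  proof -
    have w: "F 0 < 0" using Fl[of 0] by simp
    have "\<exists>n. F 0 \<le> (\<mu>^^n) (F (F 0))"
      by (rule orbit[OF mJ[unfolded J_def] msurj[unfolded J_def] msm[unfolded J_def] mup[unfolded J_def] FFJ[unfolded J_def] w])
    thus ?thesis using that by blast
  qed
  note it = iter_props[OF mJ msm mA mB, of n]
  have FJ: "F x \<in> J" if "F 0 \<le> x" "x \<le> 0" for x
  proof -
    have "F (F 0) \<le> F x" "F x \<le> F 0" using Fm[of "F 0" x] Fm[of x 0] that by auto
    thus ?thesis using FFJ F0J by (auto simp: J_def)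
  qed
  have "\<exists>y. F 0 \<le> y \<and> y \<le> 0 \<and> (\<lambda>y. (\<mu>^^n) (F y)) y = y"
  proof (rule tarski_fp)
    show "F 0 \<le> 0" using Fl[of 0] by simp
    show "F 0 \<le> (\<mu>^^n) (F (F 0))" by (rule n)
    have "(\<mu>^^n) (F 0) \<in> J" using it(1) F0J by blast
    thus "(\<mu>^^n) (F 0) \<le> 0" by (simp add: J_def)
    fix x y assume xy: "F 0 \<le> x" "x \<le> y" "y \<le> 0"
    have a: "F x \<in> J" using FJ xy by simp
    have b: "F y \<in> J" using FJ xy by simp
    have c: "F x \<le> F y" using Fm xy by simp
    show "(\<mu>^^n) (F x) \<le> (\<mu>^^n) (F y)" using it(2) a b c by blast
  qed
  then obtain y where y: "F 0 \<le> y" "y \<le> 0" "(\<mu>^^n) (F y) = y" by auto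
  have FyJ: "F y \<in> J" using FJ y by auto
  consider "y \<in> A" | "y \<in> B" using AB by auto
  thus False
  proof cases
    case 1
    hence "F y \<in> B" using F(3) by auto
    hence "(\<mu>^^n) (F y) \<in> B" using it(1) FyJ by blast
    hence "y \<in> B" using y(3) by simp
    thus False using 1 AB by auto
  next
    case 2
    hence "F y \<in> A" using F(4) by auto
    hence "(\<mu>^^n) (F y) \<in> A" using it(1) FyJ by blast
    hence "y \<in> A" using y(3) by simp
    thus False using 2 AB by auto
  qed
qed

end
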